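(* Let $n\ge 2$. The nonnegative orthant $\mathbb{Z}_{\ge 0}^{n-1}$ is the disjoint union \[\mathbb{Z}_{\ge0}^{n-1}=\bigsqcup_{b\in\mathsf{BIAS}_n}\mathcal{C}^n_b,\qquad \mathcal{C}^n_b:=\{(t_1,2t_2,\dots,(n-1)t_{n-1})+\dot g(b): t\in\mathbb{Z}_{\ge0}^{n-1}\}.\] Moreover, for $w\in\widetilde{S}_n^\circ$, the gap vector $\dot g(w)$ lies in $\mathcal{C}^n_b$ where $b$ is the bias of $w$.
   Context: An affine permutation of size $n$ is a bijection $w:\mathbb{Z}\to\mathbb{Z}$ with $w(i+n)=w(i)+n$ for all $i$ and $w(1)+\cdots+w(n)=\binom{n+1}{2}$, with base window $[w_1,\dots,w_n]=[w(1),\dots,w(n)]$. $\widetilde{S}_n^\circ$ is the set of such $w$ with $w_1<\cdots<w_n$. For $w\in\widetilde{S}_n^\circ$, an integer is a bead if it equals $w_j-mn$ for some $1\le j\le n$ and integer $m\ge0$, and a gap otherwise; the gap vector is $\dot g(w)=(g_1,\dots,g_{n-1})$ with $g_i$ the number of gaps strictly between $w_i$ and $w_{i+1}$. $\mathsf{BIAS}_n$ is the set of $w\in\widetilde{S}_n^\circ$ with $w_{i+1}-w_i\in\{1,\dots,n-1\}$ for all $i$. The bias of $w\in\widetilde{S}_n^\circ$ is the unique $b\in\mathsf{BIAS}_n$ with $b_{i+1}-b_i\equiv w_{i+1}-w_i \pmod n$ for all $i$. *)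

theory Defs
  imports Main
begin

definition affine_perm :: "nat \<Rightarrow> (int \<Rightarrow> int) \<Rightarrow> bool" where
  "affine_perm n w \<longleftrightarrow> bij w \<and> (\<forall>i. w (i + int n) = w i + int n)
     \<and> (\<Sum>i=1..int n. w i) = int ((n + 1) choose 2)"

definition Scirc :: "nat \<Rightarrow> (int \<Rightarrow> int) set" where
  "Scirc n = {w. affine_perm n w \<and> (\<forall>i. 1 \<le> i \<and> i < int n \<longrightarrow> w i < w (i + 1))}"

definition bead :: "nat \<Rightarrow> (int \<Rightarrow> int) \<Rightarrow> int \<Rightarrow> bool" where
  "bead n w x \<longleftrightarrow> (\<exists>j m. 1 \<le> j \<and> j \<le> int n \<and> 0 \<le> m \<and> x = w j - m * int n)"

definition gapvec :: "nat \<Rightarrow> (int \<Rightarrow> int) \<Rightarrow> nat list" where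
  "gapvec n w = map (\<lambda>i. card {x. w (int i) < x \<and> x < w (int i + 1) \<and> \<not> bead n w x}) [1..<n]"

definition BIAS :: "nat \<Rightarrow> (int \<Rightarrow> int) set" where
  "BIAS n = {w \<in> Scirc n. \<forall>i. 1 \<le> i \<and> i < int n \<longrightarrow>
              w (i + 1) - w i \<in> {1 .. int n - 1}}"

definition bias :: "nat \<Rightarrow> (int \<Rightarrow> int) \<Rightarrow> (int \<Rightarrow> int)" where
  "bias n w = (THE b. b \<in> BIAS n \<and> (\<forall>i. 1 \<le> i \<and> i < int n \<longrightarrow>
       (b (i + 1) - b i) mod int n = (w (i + 1) - w i) mod int n))"

definition cone :: "nat \<Rightarrow> (int \<Rightarrow> int) \<Rightarrow> nat list set" where
  "cone n b = {v. \<exists>t. length t = n - 1 \<and>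
       v = map (\<lambda>i. i * t ! (i - 1) + gapvec n b ! (i - 1)) [1..<n]}"

end

theory Submission
  imports Defs "HOL-Combinatorics.Multiset_Permutations"
begin


lemma per_nat:
  assumes "\<forall>i. f (i + N) = f i + (N::int)"
  shows "f (i + int m * N) = f i + int m * N"
proof (induction m arbitrary: i)
  case 0 then show ?case by simp
next
  case (Suc m)
  have "f (i + int (Suc m) * N) = f ((i + int m * N) + N)" by (simp add: algebra_simps)
  also have "\<dots> = f (i + int m * N) + N" using assms by blast
  also have "\<dots> = f i + int (Suc m) * N" using Suc by (simp add: algebra_simps)
  finally show ?case .
qed

lemma per_int:
  assumes "\<forall>i. f (i + N) = f i + (N::int)"
  shows "f (i + k * N) = f i + k * N"
proof (cases "k \<ge> 0")
  case True
  then obtain m where "k = int m" by (rule nonneg_int_cases)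
  then show ?thesis using per_nat[OF assms] by simp
next
  case False
  then have "0 \<le> -k" by simp
  then obtain m where "-k = int m" by (rule nonneg_int_cases)
  then have m: "k = - int m" by simp
  have "f ((i + k*N) + int m * N) = f (i + k*N) + int m * N" using per_nat[OF assms] by blast
  then show ?thesis using m by (simp add: algebra_simps)
qed

lemma decomp:
  assumes "(N::int) > 0"
  shows "z = ((z - 1) mod N + 1) + ((z-1) div N) * N" "1 \<le> (z - 1) mod N + 1" "(z - 1) mod N + 1 \<le> N"
proof -
  show "z = ((z - 1) mod N + 1) + ((z-1) div N) * N"
    using div_mult_mod_eq[of "z-1" N] by linarith
  show "1 \<le> (z - 1) mod N + 1" using assms by simp
  show "(z - 1) mod N + 1 \<le> N" using assms pos_mod_bound[of N "z-1"] by linarith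
qed

lemma small_mult_zero:
  fixes q N :: int
  assumes "N > 0" "\<bar>q * N\<bar> < N"
  shows "q = 0"
proof (rule ccontr)
  assume "q \<noteq> 0"
  then have "1 \<le> \<bar>q\<bar>" by simp
  then have "1 * N \<le> \<bar>q\<bar> * N" using assms(1) by (intro mult_right_mono) auto
  moreover have "\<bar>q * N\<bar> = \<bar>q\<bar> * N" using assms(1) by (simp add: abs_mult)
  ultimately show False using assms(2) by simp
qed

lemma ap_per:
  assumes "affine_perm n w"
  shows "w (i + k * int n) = w i + k * int n"
  using assms per_int[of w "int n"] unfolding affine_perm_def by blast

lemma ap_inj_res:
  assumes "affine_perm n w" "n > 0" "j \<in> {1..int n}" "k \<in> {1..int n}"
    "w j mod int n = w k mod int n"
  shows "j = k"
proof -
  have "int n dvd w j - w k" using assms(5) by (simp add: mod_eq_dvd_iff)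
  then obtain q where q: "w j - w k = int n * q" by (auto simp: dvd_def)
  then have "w j = w (k + q * int n)" using ap_per[OF assms(1)] by (simp add: algebra_simps)
  moreover have "inj w" using assms(1) unfolding affine_perm_def bij_def by blast
  ultimately have "j = k + q * int n" by (simp add: inj_eq)
  then have "\<bar>q * int n\<bar> < int n" using assms(3,4) by auto
  then have "q = 0" using small_mult_zero[of "int n" q] assms(2) by simp
  then show ?thesis using \<open>j = k + q * int n\<close> by simp
qed

lemma res_image:
  assumes "n > 0" "inj_on (\<lambda>j. f j mod int n) {1..int n}"
  shows "(\<lambda>j. f j mod int n) ` {1..int n} = {0..<int n}"
proof (rule card_subset_eq)
  show "finite {0..<int n}" by simp
  show "(\<lambda>j. f j mod int n) ` {1..int n} \<subseteq> {0..<int n}" using assms(1) by auto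
  show "card ((\<lambda>j. f j mod int n) ` {1..int n}) = card {0..<int n}"
    using card_image[OF assms(2)] by simp
qed

lemma per_bij:
  assumes "n > 0" "\<forall>i. f (i + int n) = f i + int n"
    "inj_on (\<lambda>j. f j mod int n) {1..int n}"
  shows "bij f"
proof -
  define N where "N = int n"
  have N: "N > 0" using assms(1) N_def by simp
  have P: "\<And>i k. f (i + k * N) = f i + k * N" using per_int[of f N] assms(2) N_def by blast
  have inj: "inj f"
  proof (rule injI)
    fix x y assume xy: "f x = f y"
    define jx where "jx = (x - 1) mod N + 1"
    define jy where "jy = (y - 1) mod N + 1"
    define kx where "kx = (x - 1) div N"
    define ky where "ky = (y - 1) div N"
    have x: "x = jx + kx * N" and y: "y = jy + ky * N"
      using decomp(1)[OF N] jx_def jy_def kx_def ky_def by auto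
    have jxr: "jx \<in> {1..N}" "jy \<in> {1..N}" using decomp(2,3)[OF N] jx_def jy_def by auto
    have "f jx + kx * N = f jy + ky * N" using xy x y P by metis
    then have "(f jx + kx * N) mod N = (f jy + ky * N) mod N" by simp
    then have "f jx mod N = f jy mod N" by simp
    then have "jx = jy" using assms(3) jxr N_def by (auto dest: inj_onD)
    then have "kx * N = ky * N" using \<open>f jx + kx * N = f jy + ky * N\<close> by simp
    then show "x = y" using x y \<open>jx = jy\<close> by simp
  qed
  have surj: "surj f"
    unfolding surj_def
  proof
    fix y
    have "y mod N \<in> {0..<N}" using N by simp
    then have "y mod N \<in> (\<lambda>j. f j mod N) ` {1..N}" using res_image[OF assms(1,3)] N_def by simp
    then obtain j where j: "j \<in> {1..N}" "f j mod N = y mod N" by auto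
    then have "y mod N = f j mod N" by simp
    then have "N dvd y - f j" by (simp add: mod_eq_dvd_iff)
    then obtain q where "y - f j = N * q" by (auto simp: dvd_def)
    then have "f (j + q * N) = y" using P[of j q] by (simp add: algebra_simps)
    then show "\<exists>x. y = f x" by metis
  qed
  show ?thesis using inj surj by (simp add: bij_def)
qed

lemma sc_ap: "w \<in> Scirc n \<Longrightarrow> affine_perm n w" by (simp add: Scirc_def)

lemma sc_inj_res:
  assumes "w \<in> Scirc n" "n > 0"
  shows "inj_on (\<lambda>j. w j mod int n) {1..int n}"
  using ap_inj_res[OF sc_ap[OF assms(1)] assms(2)] by (auto intro: inj_onI)

lemma sc_mono_aux:
  assumes "w \<in> Scirc n" "1 \<le> j" "j + 1 + int d \<le> int n"
  shows "w j < w (j + 1 + int d)"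
  using assms(3)
proof (induction d)
  case 0 then show ?case using assms(1,2) by (simp add: Scirc_def)
next
  case (Suc d)
  then have "w j < w (j + 1 + int d)" by simp
  have st: "\<forall>i. 1 \<le> i \<and> i < int n \<longrightarrow> w i < w (i+1)" using assms(1) by (simp add: Scirc_def)
  have "w (j + 1 + int d) < w (j + 1 + int d + 1)" using st[rule_format, of "j+1+int d"] assms(2) Suc.prems by auto
  moreover have eq: "j + 1 + int (Suc d) = j + 1 + int d + 1" by simp
  ultimately show ?case using \<open>w j < w (j + 1 + int d)\<close> by (simp only: eq)
qed

lemma sc_mono:
  assumes "w \<in> Scirc n" "1 \<le> j" "j < k" "k \<le> int n"
  shows "w j < w k"
proof -
  obtain d where "k = j + 1 + int d" using assms(3)
    by (metis add.commute add_diff_cancel_left' zless_iff_Suc_zadd add.assoc of_nat_Suc)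
  then show ?thesis using sc_mono_aux assms by simp
qed

lemma sc_le:
  assumes "w \<in> Scirc n" "1 \<le> j" "j \<le> k" "k \<le> int n"
  shows "w j \<le> w k"
  using sc_mono[OF assms(1,2) _ assms(4)] assms(3) by (cases "j = k") auto

lemma gap_char:
  assumes "w \<in> Scirc n" "n > 0" "1 \<le> i" "i < int n" "w i < x" "x < w (i + 1)"
  shows "(\<not> bead n w x) \<longleftrightarrow> (\<exists>j\<in>{1..i}. x mod int n = w j mod int n)"
proof -
  define N where "N = int n"
  have N: "N > 0" using assms N_def by simp
  have injr: "inj_on (\<lambda>j. w j mod N) {1..N}" using sc_inj_res[OF assms(1,2)] N_def by simp
  have "x mod N \<in> {0..<N}" using N by simp
  then have "x mod N \<in> (\<lambda>j. w j mod N) ` {1..N}" using res_image[OF assms(2) sc_inj_res[OF assms(1,2)]] N_def by simp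
  then obtain j0 where j0: "j0 \<in> {1..N}" "w j0 mod N = x mod N" by auto
  show ?thesis
  proof
    assume nb: "\<not> bead n w x"
    have "j0 \<le> i"
    proof (rule ccontr)
      assume "\<not> j0 \<le> i"
      then have "w (i + 1) \<le> w j0" using sc_le[OF assms(1)] j0(1) assms(3) N_def by auto
      then have pos: "w j0 - x > 0" using assms(6) by simp
      have "N dvd w j0 - x" using j0(2) by (simp add: mod_eq_dvd_iff)
      then obtain m where m: "w j0 - x = N * m" by (auto simp: dvd_def)
      then have "m > 0" using pos N by (simp add: zero_less_mult_iff)
      then have "bead n w x" unfolding bead_def using j0(1) m N_def
        by (intro exI[of _ j0] exI[of _ m]) (auto simp: algebra_simps)
      then show False using nb by simp
    qed
    then show "\<exists>j\<in>{1..i}. x mod int n = w j mod int n" using j0 N_def by (intro bexI[of _ j0]) auto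
  next
    assume "\<exists>j\<in>{1..i}. x mod int n = w j mod int n"
    then obtain j where j: "j \<in> {1..i}" "x mod N = w j mod N" using N_def by auto
    show "\<not> bead n w x"
    proof
      assume "bead n w x"
      then obtain k m where km: "1 \<le> k" "k \<le> N" "0 \<le> m" "x = w k - m * N"
        unfolding bead_def N_def by blast
      then have "x = w k + (-m) * N" by simp
      then have "x mod N = w k mod N" by (metis mod_mult_self1)
      then have "w k mod N = w j mod N" using j by simp
      then have "k = j" using injr km j assms(4) N_def by (auto dest: inj_onD)
      have "x \<le> w j" using km \<open>k = j\<close> N by (simp add: mult_nonneg_nonneg)
      moreover have "w j \<le> w i" using sc_le[OF assms(1)] j assms(4) by auto
      ultimately show False using assms(5) by simp
    qed
  qed
qed

lemma gapvec_nth: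
  assumes "1 \<le> i" "i < n"
  shows "gapvec n w ! (i - 1) = card {x. w (int i) < x \<and> x < w (int i + 1) \<and> \<not> bead n w x}"
proof -
  have "[1..<n] ! (i - 1) = i" using assms by simp
  then show ?thesis using assms by (simp add: gapvec_def)
qed

lemma gapvec_len: "length (gapvec n w) = n - 1" by (simp add: gapvec_def)

lemma gap_card_sc:
  assumes "w \<in> Scirc n" "1 \<le> i" "i < n"
  shows "gapvec n w ! (i - 1) = card {x. w (int i) < x \<and> x < w (int i + 1) \<and>
            x mod int n \<in> (\<lambda>j. w j mod int n) ` {1..int i}}"
proof -
  have "{x. w (int i) < x \<and> x < w (int i + 1) \<and> \<not> bead n w x} =
        {x. w (int i) < x \<and> x < w (int i + 1) \<and> x mod int n \<in> (\<lambda>j. w j mod int n) ` {1..int i}}"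
  proof (rule Collect_cong)
    fix x
    show "(w (int i) < x \<and> x < w (int i + 1) \<and> \<not> bead n w x) =
          (w (int i) < x \<and> x < w (int i + 1) \<and> x mod int n \<in> (\<lambda>j. w j mod int n) ` {1..int i})"
    proof (cases "w (int i) < x \<and> x < w (int i + 1)")
      case True
      then have "(\<not> bead n w x) = (\<exists>j\<in>{1..int i}. x mod int n = w j mod int n)"
        using gap_char[OF assms(1), of "int i" x] assms by simp
      then show ?thesis using True by auto
    qed auto
  qed
  then show ?thesis using gapvec_nth assms by simp
qed

lemma card_shift:
  fixes d :: int
  shows "card {x. P x} = card {x. P (x + d)}"
proof -
  have "{x. P x} = (\<lambda>x. x + d) ` {x. P (x + d)}"
    by (auto simp: image_iff intro!: exI[of _ "_ - d"])
  moreover have "inj_on (\<lambda>x. x + d) {x. P (x + d)}" by (auto intro: inj_onI)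
  ultimately show ?thesis by (simp add: card_image)
qed

lemma cnt_period:
  fixes N a :: int
  assumes "N > 0" "R \<subseteq> {0..<N}"
  shows "card {x. a < x \<and> x \<le> a + N \<and> x mod N \<in> R} = card R"
proof -
  have "bij_betw (\<lambda>x. x mod N) {x. a < x \<and> x \<le> a + N \<and> x mod N \<in> R} R"
  proof (rule bij_betw_imageI)
    show "inj_on (\<lambda>x. x mod N) {x. a < x \<and> x \<le> a + N \<and> x mod N \<in> R}"
    proof (rule inj_onI)
      fix x y assume xy: "x \<in> {x. a < x \<and> x \<le> a + N \<and> x mod N \<in> R}"
        "y \<in> {x. a < x \<and> x \<le> a + N \<and> x mod N \<in> R}" "x mod N = y mod N"
      then have "N dvd x - y" by (simp add: mod_eq_dvd_iff)
      then obtain q where q: "x - y = q * N" by (auto simp: dvd_def algebra_simps)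
      then have "\<bar>q * N\<bar> < N" using xy by auto
      then have "q = 0" using small_mult_zero assms(1) by blast
      then show "x = y" using q by simp
    qed
    show "(\<lambda>x. x mod N) ` {x. a < x \<and> x \<le> a + N \<and> x mod N \<in> R} = R"
    proof
      show "(\<lambda>x. x mod N) ` {x. a < x \<and> x \<le> a + N \<and> x mod N \<in> R} \<subseteq> R" by auto
      show "R \<subseteq> (\<lambda>x. x mod N) ` {x. a < x \<and> x \<le> a + N \<and> x mod N \<in> R}"
      proof
        fix v assume v: "v \<in> R"
        define x where "x = a + 1 + (v - a - 1) mod N"
        have "x mod N = (a + 1 + (v - a - 1)) mod N" unfolding x_def by (simp add: mod_add_right_eq)
        also have "\<dots> = v" using v assms(2) by auto
        finally have xm: "x mod N = v" .
        have "a < x" "x \<le> a + N" unfolding x_def using assms(1) pos_mod_bound[of N "v - a - 1"]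
          pos_mod_sign[of N "v - a - 1"] by linarith+
        then show "v \<in> (\<lambda>x. x mod N) ` {x. a < x \<and> x \<le> a + N \<and> x mod N \<in> R}"
          using xm v by (auto intro!: image_eqI[of _ _ x])
      qed
    qed
  qed
  then show ?thesis by (simp add: bij_betw_same_card)
qed

lemma cnt_gen:
  fixes N a r :: int
  assumes "N > 0" "R \<subseteq> {0..<N}" "r \<ge> 1"
  shows "card {x. a < x \<and> x < a + int t * N + r \<and> x mod N \<in> R}
       = t * card R + card {x. a < x \<and> x < a + r \<and> x mod N \<in> R}"
proof (induction t arbitrary: a)
  case 0 then show ?case by simp
next
  case (Suc t)
  have fin: "finite {x. a < x \<and> x < a + int (Suc t) * N + r \<and> x mod N \<in> R}" for a
    by (rule finite_subset[of _ "{a<..<a + int (Suc t) * N + r}"]) auto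
  have split: "{x. a < x \<and> x < a + int (Suc t) * N + r \<and> x mod N \<in> R}
      = {x. a < x \<and> x \<le> a + N \<and> x mod N \<in> R} \<union> {x. a + N < x \<and> x < (a + N) + int t * N + r \<and> x mod N \<in> R}"
    using assms(1,3) by (auto simp: algebra_simps) (smt (verit) mult_nonneg_nonneg of_nat_0_le_iff)
  have "card {x. a < x \<and> x < a + int (Suc t) * N + r \<and> x mod N \<in> R}
      = card {x. a < x \<and> x \<le> a + N \<and> x mod N \<in> R} + card {x. a + N < x \<and> x < (a + N) + int t * N + r \<and> x mod N \<in> R}"
    unfolding split
    by (rule card_Un_disjoint) (auto intro: finite_subset[of _ "{a<..a+N}"] finite_subset[of _ "{a+N<..<(a + N) + int t * N + r}"])
  also have "\<dots> = card R + (t * card R + card {x. a + N < x \<and> x < a + N + r \<and> x mod N \<in> R})"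
    using cnt_period[OF assms(1,2)] Suc.IH by simp
  also have "card {x. a + N < x \<and> x < a + N + r \<and> x mod N \<in> R} = card {x. a < x \<and> x < a + r \<and> x mod N \<in> R}"
    using card_shift[of "\<lambda>x. a + N < x \<and> x < a + N + r \<and> x mod N \<in> R" "N"]
    by (simp add: algebra_simps)
  finally show ?case by simp
qed



lemma bias_sc: "b \<in> BIAS n \<Longrightarrow> b \<in> Scirc n" by (simp add: BIAS_def)

lemma bias_step:
  assumes "b \<in> BIAS n" "1 \<le> i" "i < int n"
  shows "1 \<le> b (i+1) - b i" "b (i+1) - b i \<le> int n - 1"
  using assms by (auto simp: BIAS_def)

lemma mod_sub_eq_iff:
  fixes a b c N :: int
  shows "((a - c) mod N = (b - c) mod N) = (a mod N = b mod N)"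
  by (simp add: mod_eq_dvd_iff)

definition Tset :: "nat \<Rightarrow> (int \<Rightarrow> int) \<Rightarrow> int \<Rightarrow> int set" where
  "Tset n b i = {j \<in> {1..i}. (b j - b i) mod int n < (b (i+1) - b i) mod int n}"

lemma O_neq:
  assumes "b \<in> BIAS n" "n > 0" "j \<in> {1..int n}" "k \<in> {1..int n}" "j \<noteq> k"
  shows "(b j - b i) mod int n \<noteq> (b k - b i) mod int n"
proof
  assume "(b j - b i) mod int n = (b k - b i) mod int n"
  then have "b j mod int n = b k mod int n" by (simp add: mod_sub_eq_iff)
  then show False using sc_inj_res[OF bias_sc[OF assms(1)] assms(2)] assms(3,4,5) by (auto dest: inj_onD)
qed

lemma bias_gap:
  assumes "b \<in> BIAS n" "n \<ge> 2" "1 \<le> i" "i < n"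
  shows "gapvec n b ! (i - 1) = card (Tset n b (int i)) - 1"
    "int i \<in> Tset n b (int i)" "Tset n b (int i) \<subseteq> {1..int i}"
proof -
  define N where "N = int n"
  define ii where "ii = int i"
  have N: "N > 0" using assms N_def by simp
  have sc: "b \<in> Scirc n" using bias_sc assms by simp
  have st: "1 \<le> b (ii+1) - b ii" "b (ii+1) - b ii \<le> N - 1"
    using bias_step[OF assms(1), of ii] assms N_def ii_def by auto
  have stm: "(b (ii+1) - b ii) mod N = b (ii+1) - b ii" using st by simp
  define \<phi> where "\<phi> j = b ii + (b j - b ii) mod N" for j
  have inj: "inj_on \<phi> (Tset n b ii - {ii})"
  proof (rule inj_onI)
    fix j k assume jk: "j \<in> Tset n b ii - {ii}" "k \<in> Tset n b ii - {ii}" "\<phi> j = \<phi> k"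
    then have "(b j - b ii) mod N = (b k - b ii) mod N" by (simp add: \<phi>_def)
    moreover have "j \<in> {1..N}" "k \<in> {1..N}" using jk assms ii_def N_def by (auto simp: Tset_def)
    ultimately show "j = k" using O_neq[OF assms(1), of j k ii] N_def assms by auto
  qed
  have iiT: "ii \<in> Tset n b ii" using stm st assms ii_def N_def by (auto simp: Tset_def)
  show "int i \<in> Tset n b (int i)" using iiT ii_def by simp
  show "Tset n b (int i) \<subseteq> {1..int i}" by (auto simp: Tset_def)
  have X: "{x. b ii < x \<and> x < b (ii + 1) \<and> x mod N \<in> (\<lambda>j. b j mod N) ` {1..ii}}
        = \<phi> ` (Tset n b ii - {ii})"
  proof
    show "{x. b ii < x \<and> x < b (ii + 1) \<and> x mod N \<in> (\<lambda>j. b j mod N) ` {1..ii}} \<subseteq> \<phi> ` (Tset n b ii - {ii})"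
    proof
      fix x assume "x \<in> {x. b ii < x \<and> x < b (ii + 1) \<and> x mod N \<in> (\<lambda>j. b j mod N) ` {1..ii}}"
      then obtain j where x: "b ii < x" "x < b (ii+1)" "j \<in> {1..ii}" "x mod N = b j mod N" by auto
      have "(b j - b ii) mod N = (x - b ii) mod N" using x(4) by (simp add: mod_sub_eq_iff)
      also have "\<dots> = x - b ii" using x st by simp
      finally have e: "(b j - b ii) mod N = x - b ii" .
      have "j \<noteq> ii" using e x(1) by auto
      moreover have "j \<in> Tset n b ii" using e x stm N_def by (auto simp: Tset_def)
      moreover have "x = \<phi> j" using e by (simp add: \<phi>_def)
      ultimately show "x \<in> \<phi> ` (Tset n b ii - {ii})" by auto
    qed
    show "\<phi> ` (Tset n b ii - {ii}) \<subseteq> {x. b ii < x \<and> x < b (ii + 1) \<and> x mod N \<in> (\<lambda>j. b j mod N) ` {1..ii}}"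
    proof
      fix x assume "x \<in> \<phi> ` (Tset n b ii - {ii})"
      then obtain j where j: "j \<in> Tset n b ii" "j \<noteq> ii" "x = \<phi> j" by auto
      have jr: "j \<in> {1..ii}" using j by (auto simp: Tset_def)
      have ne: "(b j - b ii) mod N \<noteq> (b ii - b ii) mod N"
        using O_neq[OF assms(1), of j ii ii] jr j(2) assms N_def ii_def by auto
      have "(b j - b ii) mod N \<ge> 0" using N by simp
      then have pos: "(b j - b ii) mod N > 0" using ne by simp
      have lt: "(b j - b ii) mod N < b (ii+1) - b ii" using j(1) stm N_def by (simp add: Tset_def)
      have "x mod N = (b ii + (b j - b ii)) mod N" using j(3) by (simp add: \<phi>_def mod_add_right_eq)
      then have "x mod N = b j mod N" by simp
      then show "x \<in> {x. b ii < x \<and> x < b (ii + 1) \<and> x mod N \<in> (\<lambda>j. b j mod N) ` {1..ii}}"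
        using pos lt j(3) jr by (auto simp: \<phi>_def)
    qed
  qed
  have fin: "finite (Tset n b ii)" by (rule finite_subset[of _ "{1..ii}"]) (auto simp: Tset_def)
  have "gapvec n b ! (i - 1) = card (\<phi> ` (Tset n b ii - {ii}))"
    using gap_card_sc[OF sc assms(3,4)] X N_def ii_def by simp
  also have "\<dots> = card (Tset n b ii - {ii})" using card_image[OF inj] .
  also have "\<dots> = card (Tset n b ii) - 1" using iiT fin by simp
  finally show "gapvec n b ! (i - 1) = card (Tset n b (int i)) - 1" using ii_def by simp
qed

lemma bias_gap_bound:
  assumes "b \<in> BIAS n" "n \<ge> 2" "1 \<le> i" "i < n"
  shows "gapvec n b ! (i - 1) \<le> i - 1"
proof -
  have "card (Tset n b (int i)) \<le> card {1..int i}"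
    using bias_gap(3)[OF assms] by (intro card_mono) auto
  then show ?thesis using bias_gap(1)[OF assms] by simp
qed

lemma downset:
  fixes f g :: "'a \<Rightarrow> int"
  assumes "finite A" "\<forall>j\<in>A. \<forall>k\<in>A. (f j < f k) = (g j < g k)"
    "card {j\<in>A. f j < X} = card {j\<in>A. g j < Y}"
  shows "{j\<in>A. f j < X} = {j\<in>A. g j < Y}"
proof -
  have "{j\<in>A. f j < X} \<subseteq> {j\<in>A. g j < Y} \<or> {j\<in>A. g j < Y} \<subseteq> {j\<in>A. f j < X}"
  proof (rule ccontr)
    assume "\<not> ?thesis"
    then obtain j k where j: "j \<in> A" "f j < X" "\<not> g j < Y" and k: "k \<in> A" "g k < Y" "\<not> f k < X"
      by auto
    then have "f j < f k" by simp
    then have "g j < g k" using assms(2) j k by blast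
    then show False using j k by simp
  qed
  then show ?thesis
    using assms(1,3) by (metis (no_types, lifting) card_subset_eq finite_subset mem_Collect_eq subsetI)
qed

lemma modsub:
  fixes X Y N :: int
  assumes "0 \<le> X" "X < N" "0 \<le> Y" "Y < N"
  shows "(Y - X) mod N = (if X \<le> Y then Y - X else Y - X + N)"
proof (cases "X \<le> Y")
  case True then show ?thesis using assms by simp
next
  case False
  have "(Y - X) mod N = (Y - X + N) mod N" by simp
  also have "\<dots> = Y - X + N" using False assms by (intro mod_pos_pos_trivial) auto
  finally show ?thesis using False by simp
qed

lemma basechange:
  fixes x y z p N :: int
  assumes "N > 0"
  shows "((y - x) mod N < (z - x) mod N) =
    (if (x-p) mod N \<le> (y-p) mod N then (if (x-p) mod N \<le> (z-p) mod N then (y-p) mod N < (z-p) mod N else True)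
     else (if (x-p) mod N \<le> (z-p) mod N then False else (y-p) mod N < (z-p) mod N))"
proof -
  define X where "X = (x-p) mod N"
  define Y where "Y = (y-p) mod N"
  define Z where "Z = (z-p) mod N"
  have r: "0 \<le> X" "X < N" "0 \<le> Y" "Y < N" "0 \<le> Z" "Z < N" using assms X_def Y_def Z_def by auto
  have "(y - x) mod N = ((y - p) - (x - p)) mod N" by simp
  also have "\<dots> = (Y - X) mod N" unfolding X_def Y_def by (simp add: mod_diff_eq)
  finally have e1: "(y - x) mod N = (if X \<le> Y then Y - X else Y - X + N)" using modsub r by simp
  have "(z - x) mod N = ((z - p) - (x - p)) mod N" by simp
  also have "\<dots> = (Z - X) mod N" unfolding X_def Z_def by (simp add: mod_diff_eq)
  finally have e2: "(z - x) mod N = (if X \<le> Z then Z - X else Z - X + N)" using modsub r by simp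
  show ?thesis unfolding e1 e2 X_def[symmetric] Y_def[symmetric] Z_def[symmetric] using r by auto
qed



lemma eq_from_diffs:
  assumes "affine_perm n b" "affine_perm n b'" "n > 0"
    "\<forall>i. 1 \<le> i \<and> i < int n \<longrightarrow> b (i+1) - b i = b' (i+1) - b' i"
  shows "b = b'"
proof -
  define N where "N = int n"
  have N: "N > 0" using assms N_def by simp
  define c where "c = b' 1 - b 1"
  have step: "1 + int m \<le> N \<Longrightarrow> b' (1 + int m) = b (1 + int m) + c" for m
  proof (induction m)
    case 0 then show ?case by (simp add: c_def)
  next
    case (Suc m)
    have "b' (1 + int m + 1) - b' (1 + int m) = b (1 + int m + 1) - b (1 + int m)"
      using assms(4)[rule_format, of "1 + int m"] Suc.prems N_def by simp
    moreover have "b' (1 + int m) = b (1 + int m) + c" using Suc by simp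
    moreover have "1 + int (Suc m) = 1 + int m + 1" by simp
    ultimately show ?case by simp
  qed
  have onk: "k \<in> {1..N} \<Longrightarrow> b' k = b k + c" for k
  proof -
    assume k: "k \<in> {1..N}"
    then obtain m where "k = 1 + int m" by (metis atLeastAtMost_iff add.commute le_add_diff_inverse zle_iff_zadd)
    then show ?thesis using step k by simp
  qed
  have "(\<Sum>k\<in>{1..N}. b' k) = (\<Sum>k\<in>{1..N}. b k + c)" using onk by (rule sum.cong[OF refl])
  also have "\<dots> = (\<Sum>k\<in>{1..N}. b k) + N * c" using N by (simp add: sum.distrib)
  finally have "N * c = 0" using assms(1,2) N_def by (simp add: affine_perm_def)
  then have c0: "c = 0" using N by simp
  show ?thesis
  proof
    fix z
    have z: "z = ((z - 1) mod N + 1) + ((z-1) div N) * N" and zr: "(z - 1) mod N + 1 \<in> {1..N}"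
      using decomp[OF N] by auto
    have "b z = b ((z - 1) mod N + 1) + ((z-1) div N) * N"
      using ap_per[OF assms(1)] z N_def by metis
    moreover have "b' z = b' ((z - 1) mod N + 1) + ((z-1) div N) * N"
      using ap_per[OF assms(2)] z N_def by metis
    ultimately show "b z = b' z" using onk[OF zr] c0 by simp
  qed
qed

lemma count_below:
  fixes f :: "int \<Rightarrow> int"
  assumes "inj_on f A" "f ` A = {0..<N}" "k \<in> A"
  shows "card {j\<in>A. f j < f k} = nat (f k)"
proof -
  have "bij_betw f {j\<in>A. f j < f k} {0..<f k}"
  proof (rule bij_betw_imageI)
    show "inj_on f {j\<in>A. f j < f k}" using assms(1) by (auto intro: inj_on_subset)
    show "f ` {j\<in>A. f j < f k} = {0..<f k}"
    proof
      show "f ` {j\<in>A. f j < f k} \<subseteq> {0..<f k}" using assms(2) by force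
      show "{0..<f k} \<subseteq> f ` {j\<in>A. f j < f k}"
      proof
        fix v assume v: "v \<in> {0..<f k}"
        have "f k < N" using assms(2,3) by force
        then have "v \<in> f ` A" using v assms(2) by auto
        then show "v \<in> f ` {j\<in>A. f j < f k}" using v by auto
      qed
    qed
  qed
  then show ?thesis by (simp add: bij_betw_same_card)
qed

lemma bias_inj:
  assumes b: "b \<in> BIAS n" and b': "b' \<in> BIAS n" and n: "n \<ge> 2"
    and g: "gapvec n b = gapvec n b'"
  shows "b = b'"
proof -
  define N where "N = int n"
  have N: "N > 0" using n N_def by simp
  define Of where "Of c i j = (c j - c i) mod N" for c :: "int \<Rightarrow> int" and i j
  define P where "P i \<longleftrightarrow> (\<forall>j\<in>{1..i}. \<forall>k\<in>{1..i}. (Of b i j < Of b i k) = (Of b' i j < Of b' i k))" for i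
  have Oneq: "c \<in> BIAS n \<Longrightarrow> j \<in> {1..N} \<Longrightarrow> k \<in> {1..N} \<Longrightarrow> j \<noteq> k \<Longrightarrow> Of c i j \<noteq> Of c i k" for c i j k
    using O_neq[of c n j k i] n N_def Of_def by auto
  have Pm: "1 + int m \<le> N \<Longrightarrow> P (1 + int m)" for m
  proof (induction m)
    case 0 then show ?case by (simp add: P_def)
  next
    case (Suc m)
    define ii where "ii = 1 + int m"
    have IH: "P ii" using Suc ii_def by simp
    have iiN: "ii < N" using Suc.prems ii_def by simp
    have "gapvec n b ! (Suc m - 1) = gapvec n b' ! (Suc m - 1)" using g by simp
    then have eqm: "card (Tset n b ii) - 1 = card (Tset n b' ii) - 1"
      using bias_gap(1)[OF b n, of "Suc m"] bias_gap(1)[OF b' n, of "Suc m"] iiN N_def ii_def by simp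
    have c1: "card (Tset n c ii) \<ge> 1" if c: "c \<in> BIAS n" for c
    proof -
      have mem: "ii \<in> Tset n c ii" "Tset n c ii \<subseteq> {1..ii}"
        using bias_gap(2,3)[OF c n, of "Suc m"] iiN N_def ii_def by auto
      have "finite (Tset n c ii)" using finite_subset[OF mem(2)] by simp
      then show ?thesis using card_mono[of "Tset n c ii" "{ii}"] mem(1) by simp
    qed
    have ceq: "card (Tset n b ii) = card (Tset n b' ii)" using eqm c1[OF b] c1[OF b'] by linarith
    have TT: "Tset n b ii = {j\<in>{1..ii}. Of b ii j < Of b ii (ii+1)}"
      "Tset n b' ii = {j\<in>{1..ii}. Of b' ii j < Of b' ii (ii+1)}"
      by (auto simp: Tset_def Of_def N_def)
    have Teq: "{j\<in>{1..ii}. Of b ii j < Of b ii (ii+1)} = {j\<in>{1..ii}. Of b' ii j < Of b' ii (ii+1)}"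
      using downset[of "{1..ii}" "Of b ii" "Of b' ii" "Of b ii (ii+1)" "Of b' ii (ii+1)"] IH ceq TT
      unfolding P_def by simp
    have Q: "(Of b ii j < Of b ii k) = (Of b' ii j < Of b' ii k)" if jk: "j \<in> {1..ii+1}" "k \<in> {1..ii+1}" for j k
    proof -
      have jN: "j \<in> {1..N}" "k \<in> {1..N}" "ii + 1 \<in> {1..N}" using jk iiN ii_def by auto
      consider "j \<le> ii" "k \<le> ii" | "j = ii + 1" "k = ii + 1" | "j \<le> ii" "k = ii + 1" | "j = ii + 1" "k \<le> ii"
        using jk by force
      then show ?thesis
      proof cases
        case 1 then show ?thesis using IH jk unfolding P_def by auto
      next
        case 2 then show ?thesis by simp
      next
        case 3
        have kr: "j \<in> {1..ii}" using jk 3 by auto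
        from Teq have "(j \<in> {j\<in>{1..ii}. Of b ii j < Of b ii (ii+1)}) = (j \<in> {j\<in>{1..ii}. Of b' ii j < Of b' ii (ii+1)})"
          by simp
        with kr have "(Of b ii j < Of b ii (ii+1)) = (Of b' ii j < Of b' ii (ii+1))" by simp
        then show ?thesis using 3 by simp
      next
        case 4
        have ne: "Of b ii k \<noteq> Of b ii (ii+1)" "Of b' ii k \<noteq> Of b' ii (ii+1)"
          using Oneq[OF b] Oneq[OF b'] jN 4 by auto
        have kr: "k \<in> {1..ii}" using jk 4 by auto
        from Teq have "(k \<in> {j\<in>{1..ii}. Of b ii j < Of b ii (ii+1)}) = (k \<in> {j\<in>{1..ii}. Of b' ii j < Of b' ii (ii+1)})"
          by simp
        with kr have kk: "(Of b ii k < Of b ii (ii+1)) = (Of b' ii k < Of b' ii (ii+1))" by simp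
        have "(Of b ii (ii+1) < Of b ii k) = (Of b' ii (ii+1) < Of b' ii k)"
          using kk ne by (smt (verit))
        then show ?thesis using 4 by simp
      qed
    qed
    have "P (ii + 1)" unfolding P_def
    proof (intro ballI)
      fix j k assume jk: "j \<in> {1..ii+1}" "k \<in> {1..ii+1}"
      have i1: "ii + 1 \<in> {1..ii+1}" using ii_def by simp
      have le: "(Of c ii u \<le> Of c ii v) = (\<not> Of c ii v < Of c ii u)" for c u v by auto
      have e1: "(Of b ii (ii+1) \<le> Of b ii j) = (Of b' ii (ii+1) \<le> Of b' ii j)" using Q[OF jk(1) i1] le by simp
      have e2: "(Of b ii (ii+1) \<le> Of b ii k) = (Of b' ii (ii+1) \<le> Of b' ii k)" using Q[OF jk(2) i1] le by simp
      have e3: "(Of b ii j < Of b ii k) = (Of b' ii j < Of b' ii k)" using Q[OF jk] .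
      have bc: "(Of c (ii+1) j < Of c (ii+1) k) = (if Of c ii (ii+1) \<le> Of c ii j then (if Of c ii (ii+1) \<le> Of c ii k then Of c ii j < Of c ii k else True)
         else (if Of c ii (ii+1) \<le> Of c ii k then False else Of c ii j < Of c ii k))" for c
        unfolding Of_def using basechange[OF N, of "c j" "c (ii+1)" "c k" "c ii"] by simp
      show "(Of b (ii + 1) j < Of b (ii + 1) k) = (Of b' (ii + 1) j < Of b' (ii + 1) k)"
        unfolding bc[of b] bc[of b'] e1 e2 e3 by simp
    qed
    then show ?case using ii_def by (simp add: algebra_simps)
  qed
  have PN: "P N"
  proof -
    have "N = 1 + int (n - 1)" using n N_def by simp
    then show ?thesis using Pm[of "n - 1"] by simp
  qed
  have img: "Of c N ` {1..N} = {0..<N}" if c: "c \<in> BIAS n" for c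
  proof -
    have "inj_on (\<lambda>j. (c j - c N) mod int n) {1..int n}"
    proof (rule inj_onI)
      fix j k assume "j \<in> {1..int n}" "k \<in> {1..int n}" "(c j - c N) mod int n = (c k - c N) mod int n"
      then show "j = k" using Oneq[OF c, of j k N] N_def Of_def by auto
    qed
    then have "(\<lambda>j. (c j - c N) mod int n) ` {1..int n} = {0..<int n}"
      using res_image[of n "\<lambda>j. c j - c N"] n by simp
    then show ?thesis by (simp add: Of_def N_def)
  qed
  have injO: "inj_on (Of c N) {1..N}" if c: "c \<in> BIAS n" for c
  proof (rule inj_onI)
    fix j k assume "j \<in> {1..N}" "k \<in> {1..N}" "Of c N j = Of c N k"
    then show "j = k" using Oneq[OF c, of j k N] by auto
  qed
  have Oeq: "Of b N k = Of b' N k" if k: "k \<in> {1..N}" for k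
  proof -
    have "Of b N k = int (card {j\<in>{1..N}. Of b N j < Of b N k})"
      using count_below[OF injO[OF b] img[OF b] k] img[OF b] k by force
    also have "{j\<in>{1..N}. Of b N j < Of b N k} = {j\<in>{1..N}. Of b' N j < Of b' N k}"
      using PN k unfolding P_def by auto
    also have "int (card \<dots>) = Of b' N k"
      using count_below[OF injO[OF b'] img[OF b'] k] img[OF b'] k by force
    finally show ?thesis .
  qed
  have diffs: "b (i+1) - b i = b' (i+1) - b' i" if i: "1 \<le> i" "i < N" for i
  proof -
    have d: "(c (i+1) - c i) = (Of c N (i+1) - Of c N i) mod N" if c: "c \<in> BIAS n" for c
    proof -
      have "(Of c N (i+1) - Of c N i) mod N = ((c (i+1) - c N) - (c i - c N)) mod N"
        unfolding Of_def by (simp add: mod_diff_eq)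
      also have "\<dots> = (c (i+1) - c i) mod N" by simp
      also have "\<dots> = c (i+1) - c i" using bias_step[OF c, of i] i N_def by simp
      finally show ?thesis by simp
    qed
    show ?thesis using d[OF b] d[OF b'] Oeq[of i] Oeq[of "i+1"] i by simp
  qed
  show ?thesis
    using eq_from_diffs[OF sc_ap[OF bias_sc[OF b]] sc_ap[OF bias_sc[OF b']]] diffs n N_def by simp
qed



primrec accum :: "(int \<Rightarrow> int) \<Rightarrow> nat \<Rightarrow> int" where
  "accum f 0 = 0"
| "accum f (Suc m) = accum f m + f (1 + int m)"

lemma diffcong:
  fixes f g :: "int \<Rightarrow> int" and N k :: int
  assumes "\<forall>i. 1 \<le> i \<and> i < N \<longrightarrow> (f (i+1) - f i) mod N = (g (i+1) - g i) mod N"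
    "k \<in> {1..N}"
  shows "(f k - f 1) mod N = (g k - g 1) mod N"
proof -
  have "1 + int m \<le> N \<Longrightarrow> (f (1 + int m) - f 1) mod N = (g (1 + int m) - g 1) mod N" for m
  proof (induction m)
    case 0 then show ?case by simp
  next
    case (Suc m)
    have e: "1 + int (Suc m) = 1 + int m + 1" by simp
    have IH: "(f (1 + int m) - f 1) mod N = (g (1 + int m) - g 1) mod N" using Suc by simp
    have st: "(f (1 + int m + 1) - f (1 + int m)) mod N = (g (1 + int m + 1) - g (1 + int m)) mod N"
      using assms(1)[rule_format, of "1 + int m"] Suc.prems by simp
    have "(f (1 + int m + 1) - f 1) mod N = ((f (1 + int m + 1) - f (1 + int m)) mod N + (f (1 + int m) - f 1) mod N) mod N"
      by (simp add: mod_add_eq)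
    also have "\<dots> = ((g (1 + int m + 1) - g (1 + int m)) mod N + (g (1 + int m) - g 1) mod N) mod N"
      using IH st by simp
    also have "\<dots> = (g (1 + int m + 1) - g 1) mod N" by (simp add: mod_add_eq)
    finally show ?case using e by simp
  qed
  moreover obtain m where "k = 1 + int m" using assms(2)
    by (metis atLeastAtMost_iff add.commute le_add_diff_inverse zle_iff_zadd)
  ultimately show ?thesis using assms(2) by simp
qed

lemma diffcong2:
  fixes f g :: "int \<Rightarrow> int" and N k j :: int
  assumes "\<forall>i. 1 \<le> i \<and> i < N \<longrightarrow> (f (i+1) - f i) mod N = (g (i+1) - g i) mod N"
    "k \<in> {1..N}" "j \<in> {1..N}"
  shows "(f k - f j) mod N = (g k - g j) mod N"
proof -
  have "(f k - f j) mod N = ((f k - f 1) mod N - (f j - f 1) mod N) mod N" by (simp add: mod_diff_eq)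
  also have "\<dots> = ((g k - g 1) mod N - (g j - g 1) mod N) mod N"
    using diffcong[OF assms(1,2)] diffcong[OF assms(1,3)] by simp
  also have "\<dots> = (g k - g j) mod N" by (simp add: mod_diff_eq)
  finally show ?thesis .
qed

lemma sum_res:
  assumes "n > 0" "inj_on (\<lambda>j. a j mod int n) {1..int n}"
  shows "(\<Sum>k\<in>{1..int n}. a k) mod int n = int ((n+1) choose 2) mod int n"
proof -
  define N where "N = int n"
  have N: "N > 0" using assms N_def by simp
  have ia: "inj_on (\<lambda>j. a j mod N) {1..N}" using assms N_def by simp
  have iid: "inj_on (\<lambda>j. j mod N) {1..N}"
  proof (rule inj_onI)
    fix x y assume xy: "x \<in> {1..N}" "y \<in> {1..N}" "x mod N = y mod N"
    then have "N dvd x - y" by (simp add: mod_eq_dvd_iff)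
    then obtain q where q: "x - y = q * N" by (auto simp: dvd_def algebra_simps)
    then have "\<bar>q * N\<bar> < N" using xy by auto
    then have "q = 0" using small_mult_zero N by blast
    then show "x = y" using q by simp
  qed
  have s1: "(\<Sum>k\<in>{1..N}. a k mod N) = (\<Sum>v\<in>{0..<N}. v)"
    using sum.reindex[OF ia, of "\<lambda>v. v"] res_image[OF assms(1), of a] assms N_def by simp
  have s2: "(\<Sum>k\<in>{1..N}. k mod N) = (\<Sum>v\<in>{0..<N}. v)"
    using sum.reindex[OF iid, of "\<lambda>v. v"] res_image[OF assms(1), of "\<lambda>j. j"] iid N_def by simp
  have "(\<Sum>k\<in>{1..N}. a k) mod N = (\<Sum>k\<in>{1..N}. a k mod N) mod N" by (simp add: mod_sum_eq)
  also have "\<dots> = (\<Sum>k\<in>{1..N}. k mod N) mod N" using s1 s2 by simp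
  also have "\<dots> = (\<Sum>k\<in>{1..N}. k) mod N" by (simp add: mod_sum_eq)
  also have "(\<Sum>k\<in>{1..N}. k) = int ((n+1) choose 2)"
  proof -
    have "(\<Sum>k\<in>{1..N}. k) = (N * (N + 1) - 1 * (1 - 1)) div 2" using Sum_Icc_int[of 1 N] N by simp
    also have "\<dots> = int ((n + 1) * n div 2)" using N_def by (simp add: zdiv_int algebra_simps)
    also have "\<dots> = int ((n+1) choose 2)" by (simp add: choose_two)
    finally show ?thesis .
  qed
  finally show ?thesis using N_def by simp
qed

lemma construct:
  assumes n: "n \<ge> 2" and ia: "inj_on (\<lambda>j. a j mod int n) {1..int n}"
  shows "\<exists>b\<in>BIAS n. \<forall>i. 1 \<le> i \<and> i < int n \<longrightarrow> (b (i+1) - b i) mod int n = (a (i+1) - a i) mod int n"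
proof -
  define N where "N = int n"
  have N: "N > 0" using n N_def by simp
  define \<delta> where "\<delta> i = (a (i+1) - a i) mod N" for i
  define f where "f k = accum \<delta> (nat (k - 1))" for k
  define S where "S = (\<Sum>k\<in>{1..N}. f k)"
  define C where "C = int ((n+1) choose 2)"
  define s where "s = (C - S) div N"
  define b where "b z = f ((z - 1) mod N + 1) + s + ((z - 1) div N) * N" for z
  have fstep: "f (i+1) - f i = \<delta> i" if "1 \<le> i" for i
  proof -
    have "nat (i + 1 - 1) = Suc (nat (i - 1))" using that by simp
    moreover have "1 + int (nat (i - 1)) = i" using that by simp
    ultimately show ?thesis unfolding f_def by simp
  qed
  have f1: "f 1 = 0" by (simp add: f_def)
  have bk: "b k = f k + s" if "k \<in> {1..N}" for k
  proof -
    have "(k - 1) mod N = k - 1" "(k - 1) div N = 0" using that by auto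
    then show ?thesis unfolding b_def by simp
  qed
  have per: "\<forall>z. b (z + N) = b z + N"
  proof
    fix z
    have e: "z + N - 1 = (z-1) + 1*N" by simp
    have "(z + N - 1) mod N = (z - 1) mod N" unfolding e by (rule mod_mult_self1)
    moreover have "(z + N - 1) div N = (z - 1) div N + 1" unfolding e
      using div_mult_self1[of N "z-1" 1] N by simp
    ultimately show "b (z + N) = b z + N" unfolding b_def by (simp add: algebra_simps)
  qed
  have dne: "\<delta> i \<noteq> 0" if i: "1 \<le> i" "i < N" for i
  proof
    assume "\<delta> i = 0"
    then have "N dvd a (i+1) - a i" unfolding \<delta>_def by (simp add: dvd_eq_mod_eq_0)
    then have "a (i+1) mod N = a i mod N" by (simp add: mod_eq_dvd_iff)
    then have "i + 1 = i" using ia i N_def by (auto dest: inj_onD)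
    then show False by simp
  qed
  have bdiff: "b (i+1) - b i = \<delta> i" if i: "1 \<le> i" "i < N" for i
    using bk[of i] bk[of "i+1"] fstep[of i] i by simp
  have drange: "1 \<le> \<delta> i" "\<delta> i \<le> N - 1" if i: "1 \<le> i" "i < N" for i
  proof -
    have "0 \<le> \<delta> i" "\<delta> i < N" unfolding \<delta>_def using N by auto
    then show "1 \<le> \<delta> i" "\<delta> i \<le> N - 1" using dne[OF i] by auto
  qed
  have dcong: "\<forall>i. 1 \<le> i \<and> i < N \<longrightarrow> (b (i+1) - b i) mod N = (a (i+1) - a i) mod N"
    using bdiff by (simp add: \<delta>_def)
  have binj: "inj_on (\<lambda>j. b j mod int n) {1..int n}"
  proof (rule inj_onI)
    fix j k assume jk: "j \<in> {1..int n}" "k \<in> {1..int n}" "b j mod int n = b k mod int n"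
    have "(b j - b 1) mod N = (b k - b 1) mod N" using jk N_def by (simp add: mod_sub_eq_iff)
    then have "(a j - a 1) mod N = (a k - a 1) mod N"
      using diffcong[OF dcong, of j] diffcong[OF dcong, of k] jk N_def by simp
    then have "a j mod N = a k mod N" by (simp add: mod_sub_eq_iff)
    then show "j = k" using ia jk N_def by (auto dest: inj_onD)
  qed
  have bij: "bij b" using per_bij[OF _ _ binj] per n N_def by simp
  have fcong: "f k mod N = (a k - a 1) mod N" if k: "k \<in> {1..N}" for k
  proof -
    have dc: "\<forall>i. 1 \<le> i \<and> i < N \<longrightarrow> (f (i+1) - f i) mod N = (a (i+1) - a i) mod N"
      using fstep by (simp add: \<delta>_def)
    show ?thesis using diffcong[OF dc k] f1 by simp
  qed
  have "S mod N = (\<Sum>k\<in>{1..N}. f k mod N) mod N" unfolding S_def by (simp add: mod_sum_eq)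
  also have "\<dots> = (\<Sum>k\<in>{1..N}. (a k - a 1) mod N) mod N" using fcong by simp
  also have "\<dots> = (\<Sum>k\<in>{1..N}. a k - a 1) mod N" by (simp add: mod_sum_eq)
  also have "(\<Sum>k\<in>{1..N}. a k - a 1) = (\<Sum>k\<in>{1..N}. a k) + (- a 1) * N"
    using N by (simp add: sum_subtractf)
  also have "((\<Sum>k\<in>{1..N}. a k) + (- a 1) * N) mod N = (\<Sum>k\<in>{1..N}. a k) mod N"
    by (metis mod_mult_self1)
  also have "\<dots> = C mod N" using sum_res[OF _ ia] n N_def C_def by simp
  finally have "S mod N = C mod N" .
  then have "C mod N = S mod N" by simp
  then have dv: "N dvd C - S" by (simp add: mod_eq_dvd_iff)
  have "(\<Sum>k\<in>{1..N}. b k) = (\<Sum>k\<in>{1..N}. f k + s)" using bk by simp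
  also have "\<dots> = S + N * s" using N by (simp add: sum.distrib S_def)
  also have "\<dots> = C" using dv unfolding s_def by simp
  finally have bsum: "(\<Sum>k\<in>{1..N}. b k) = C" .
  have ap: "affine_perm n b" unfolding affine_perm_def using bij per bsum N_def C_def by simp
  have "b \<in> BIAS n" unfolding BIAS_def Scirc_def
    using ap bdiff drange N_def by force
  then show ?thesis using dcong N_def by auto
qed



lemma bias_prop:
  assumes n: "n \<ge> 2" and w: "w \<in> Scirc n"
  shows "bias n w \<in> BIAS n \<and> (\<forall>i. 1 \<le> i \<and> i < int n \<longrightarrow>
       (bias n w (i + 1) - bias n w i) mod int n = (w (i + 1) - w i) mod int n)"
proof -
  have ex1: "\<exists>!b. b \<in> BIAS n \<and> (\<forall>i. 1 \<le> i \<and> i < int n \<longrightarrow>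
       (b (i + 1) - b i) mod int n = (w (i + 1) - w i) mod int n)"
  proof (rule ex_ex1I)
    show "\<exists>b. b \<in> BIAS n \<and> (\<forall>i. 1 \<le> i \<and> i < int n \<longrightarrow>
       (b (i + 1) - b i) mod int n = (w (i + 1) - w i) mod int n)"
      using construct[OF n sc_inj_res[OF w]] n by auto
  next
    fix b1 b2
    assume b1: "b1 \<in> BIAS n \<and> (\<forall>i. 1 \<le> i \<and> i < int n \<longrightarrow>
       (b1 (i + 1) - b1 i) mod int n = (w (i + 1) - w i) mod int n)"
      and b2: "b2 \<in> BIAS n \<and> (\<forall>i. 1 \<le> i \<and> i < int n \<longrightarrow>
       (b2 (i + 1) - b2 i) mod int n = (w (i + 1) - w i) mod int n)"
    have "b1 (i+1) - b1 i = b2 (i+1) - b2 i" if i: "1 \<le> i" "i < int n" for i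
    proof -
      have r1: "1 \<le> b1 (i+1) - b1 i" "b1 (i+1) - b1 i \<le> int n - 1" using bias_step[of b1 n i] b1 i by auto
      have r2: "1 \<le> b2 (i+1) - b2 i" "b2 (i+1) - b2 i \<le> int n - 1" using bias_step[of b2 n i] b2 i by auto
      have "(b1 (i+1) - b1 i) mod int n = (b2 (i+1) - b2 i) mod int n" using b1 b2 i by simp
      then show ?thesis using r1 r2 by simp
    qed
    then show "b1 = b2"
      using eq_from_diffs[of n b1 b2] b1 b2 n by (auto simp: BIAS_def Scirc_def)
  qed
  show ?thesis unfolding bias_def by (rule theI'[OF ex1])
qed

lemma part3:
  assumes n: "n \<ge> 2" and w: "w \<in> Scirc n"
  shows "gapvec n w \<in> cone n (bias n w)"
proof -
  define b where "b = bias n w"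
  define N where "N = int n"
  have N: "N > 0" using n N_def by simp
  have bB: "b \<in> BIAS n" and bc: "\<forall>i. 1 \<le> i \<and> i < N \<longrightarrow> (b (i + 1) - b i) mod N = (w (i + 1) - w i) mod N"
    using bias_prop[OF n w] b_def N_def by auto
  have bS: "b \<in> Scirc n" using bias_sc[OF bB] .
  have key: "gapvec n w ! (i - 1) = i * nat ((w (int i + 1) - w (int i)) div N) + gapvec n b ! (i - 1)"
    if i: "1 \<le> i" "i < n" for i
  proof -
    define ii where "ii = int i"
    have iir: "1 \<le> ii" "ii < N" using i ii_def N_def by auto
    define r where "r = b (ii+1) - b ii"
    define d where "d = w (ii+1) - w ii"
    have rr: "1 \<le> r" "r \<le> N - 1" using bias_step[OF bB iir(1)] iir N_def r_def by auto
    have dpos: "d > 0" using sc_mono[OF w iir(1), of "ii+1"] iir N_def d_def by simp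
    have "r mod N = d mod N" using bc iir r_def d_def by simp
    then have rd: "r = d mod N" using rr by simp
    define t where "t = nat (d div N)"
    have "d div N \<ge> 0" using dpos N by (simp add: pos_imp_zdiv_nonneg_iff)
    then have dt: "d = int t * N + r" using rd t_def div_mult_mod_eq[of d N] by simp
    define Rw where "Rw = (\<lambda>j. w j mod N) ` {1..ii}"
    define Rb where "Rb = (\<lambda>j. b j mod N) ` {1..ii}"
    have Rsub: "Rw \<subseteq> {0..<N}" using N Rw_def by auto
    have "inj_on (\<lambda>j. w j mod N) {1..ii}"
      using sc_inj_res[OF w] n N_def iir by (auto intro: inj_on_subset)
    then have cRw: "card Rw = i" using Rw_def ii_def by (simp add: card_image)
    have "gapvec n w ! (i - 1) = card {x. w ii < x \<and> x < w (ii + 1) \<and> x mod N \<in> Rw}"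
      using gap_card_sc[OF w i] ii_def Rw_def N_def by simp
    also have "w (ii + 1) = w ii + int t * N + r" using dt d_def by simp
    also have "card {x. w ii < x \<and> x < w ii + int t * N + r \<and> x mod N \<in> Rw}
        = t * card Rw + card {x. w ii < x \<and> x < w ii + r \<and> x mod N \<in> Rw}"
      using cnt_gen[OF N Rsub rr(1)] by simp
    also have "card {x. w ii < x \<and> x < w ii + r \<and> x mod N \<in> Rw}
        = card {x. w ii < x + (w ii - b ii) \<and> x + (w ii - b ii) < w ii + r \<and> (x + (w ii - b ii)) mod N \<in> Rw}"
      by (rule card_shift)
    also have "{x. w ii < x + (w ii - b ii) \<and> x + (w ii - b ii) < w ii + r \<and> (x + (w ii - b ii)) mod N \<in> Rw}
        = {x. b ii < x \<and> x < b (ii + 1) \<and> x mod N \<in> Rb}"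
    proof (rule Collect_cong)
      fix x
      have memb: "((x + (w ii - b ii)) mod N \<in> Rw) = (x mod N \<in> Rb)"
      proof -
        have "((x + (w ii - b ii)) mod N = w j mod N) = (x mod N = b j mod N)" if j: "j \<in> {1..ii}" for j
        proof -
          have "(w j - w ii) mod N = (b j - b ii) mod N"
            using diffcong2[OF bc, of j ii] j iir by auto
          then have e: "N dvd (w j - w ii) - (b j - b ii)" by (simp add: mod_eq_dvd_iff)
          have "((x + (w ii - b ii)) mod N = w j mod N) = (N dvd (x - b j) - ((w j - w ii) - (b j - b ii)))"
            by (simp add: mod_eq_dvd_iff algebra_simps)
          also have "\<dots> = (N dvd x - b j)" using e by (metis dvd_diff diff_add_cancel dvd_add)
          also have "\<dots> = (x mod N = b j mod N)" by (simp add: mod_eq_dvd_iff)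
          finally show ?thesis .
        qed
        then have eqv: "\<forall>j\<in>{1..ii}. ((x + (w ii - b ii)) mod N = w j mod N) = (x mod N = b j mod N)" by blast
        show ?thesis unfolding Rw_def Rb_def image_iff using eqv by blast
      qed
      show "(w ii < x + (w ii - b ii) \<and> x + (w ii - b ii) < w ii + r \<and> (x + (w ii - b ii)) mod N \<in> Rw)
          = (b ii < x \<and> x < b (ii + 1) \<and> x mod N \<in> Rb)"
        unfolding memb r_def by auto
    qed
    also have "card {x. b ii < x \<and> x < b (ii + 1) \<and> x mod N \<in> Rb} = gapvec n b ! (i - 1)"
      using gap_card_sc[OF bS i] ii_def Rb_def N_def by simp
    finally show ?thesis using cRw t_def d_def ii_def by (simp add: mult.commute)
  qed
  define tl where "tl = map (\<lambda>i. nat ((w (int i + 1) - w (int i)) div N)) [1..<n]"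
  have "gapvec n w = map (\<lambda>i. i * tl ! (i - 1) + gapvec n b ! (i - 1)) [1..<n]"
  proof (rule nth_equalityI)
    show "length (gapvec n w) = length (map (\<lambda>i. i * tl ! (i - 1) + gapvec n b ! (i - 1)) [1..<n])"
      by (simp add: gapvec_len)
  next
    fix k assume "k < length (gapvec n w)"
    then have k: "k < n - 1" by (simp add: gapvec_len)
    have "map (\<lambda>i. i * tl ! (i - 1) + gapvec n b ! (i - 1)) [1..<n] ! k = (k+1) * tl ! k + gapvec n b ! k"
      using k by simp
    also have "tl ! k = nat ((w (int (k+1) + 1) - w (int (k+1))) div N)" using k tl_def by simp
    finally show "gapvec n w ! k = map (\<lambda>i. i * tl ! (i - 1) + gapvec n b ! (i - 1)) [1..<n] ! k"
      using key[of "k+1"] k by simp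
  qed
  moreover have "length tl = n - 1" using tl_def by simp
  ultimately show ?thesis unfolding cone_def b_def by blast
qed



definition codes :: "nat \<Rightarrow> nat list set" where
  "codes m = {v. length v = m \<and> (\<forall>k<m. v ! k \<le> k)}"

lemma codes_Suc: "codes (Suc m) = (\<lambda>(v, x). v @ [x]) ` (codes m \<times> {0..m})"
proof
  show "codes (Suc m) \<subseteq> (\<lambda>(v, x). v @ [x]) ` (codes m \<times> {0..m})"
  proof
    fix v assume v: "v \<in> codes (Suc m)"
    then have len: "length v = Suc m" by (simp add: codes_def)
    then have ve: "v = butlast v @ [last v]" by (metis append_butlast_last_id length_0_conv nat.distinct(1))
    have "butlast v \<in> codes m" using v len by (auto simp: codes_def nth_butlast)
    moreover have "last v \<le> m"
    proof -
      have "v \<noteq> []" using len by auto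
      then have "last v = v ! m" using len by (simp add: last_conv_nth)
      then show ?thesis using v len by (simp add: codes_def)
    qed
    ultimately show "v \<in> (\<lambda>(v, x). v @ [x]) ` (codes m \<times> {0..m})"
      using ve by (auto intro!: image_eqI[of _ _ "(butlast v, last v)"])
  qed
  show "(\<lambda>(v, x). v @ [x]) ` (codes m \<times> {0..m}) \<subseteq> codes (Suc m)"
    by (auto simp: codes_def nth_append less_Suc_eq)
qed

lemma codes_card: "finite (codes m) \<and> card (codes m) = fact m"
proof (induction m)
  case 0
  have "codes 0 = {[]}" by (auto simp: codes_def)
  then show ?case by simp
next
  case (Suc m)
  have inj: "inj_on (\<lambda>(v, x). v @ [x]) (codes m \<times> {0..m})" by (auto intro: inj_onI)
  have "card (codes (Suc m)) = card (codes m \<times> {0..m})"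
    unfolding codes_Suc using card_image[OF inj] .
  also have "\<dots> = fact m * Suc m" using Suc by (simp add: card_cartesian_product)
  finally show ?case using Suc unfolding codes_Suc by (simp add: algebra_simps)
qed

lemma gap_codes:
  assumes "b \<in> BIAS n" "n \<ge> 2"
  shows "gapvec n b \<in> codes (n - 1)"
proof -
  have "gapvec n b ! k \<le> k" if "k < n - 1" for k
    using bias_gap_bound[OF assms, of "k+1"] that by simp
  then show ?thesis by (simp add: codes_def gapvec_len)
qed

lemma bias_card_lower:
  assumes n: "n \<ge> 2" and fin: "finite (BIAS n)"
  shows "fact (n - 1) \<le> card (BIAS n)"
proof -
  define N where "N = int n"
  have N: "N > 0" using n N_def by simp
  define perms where "perms = permutations_of_set {1..<n}"
  define ap where "ap p k = int ((0 # p) ! nat (k - 1))" for p :: "nat list" and k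
  define Cg where "Cg p b \<longleftrightarrow> b \<in> BIAS n \<and> (\<forall>i. 1 \<le> i \<and> i < int n \<longrightarrow> (b (i+1) - b i) mod int n = (ap p (i+1) - ap p i) mod int n)" for p b
  define \<psi> where "\<psi> p = (SOME b. Cg p b)" for p
  have pp: "set p = {1..<n}" "distinct p" "length p = n - 1" if "p \<in> perms" for p
  proof -
    show "set p = {1..<n}" "distinct p" using that by (auto simp: perms_def permutations_of_set_def)
    then show "length p = n - 1" using distinct_card[of p] by simp
  qed
  have dp: "distinct (0 # p)" "length (0 # p) = n" "set (0 # p) = {0..<n}" if "p \<in> perms" for p
    using pp[OF that] n by auto
  have aprange: "0 \<le> ap p k \<and> ap p k < N" if "p \<in> perms" "k \<in> {1..N}" for p k
  proof -
    have "nat (k - 1) < length (0 # p)" using that dp[OF that(1)] N_def by auto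
    then have "(0 # p) ! nat (k - 1) \<in> {0..<n}" using dp[OF that(1)] nth_mem by blast
    then show ?thesis by (simp add: ap_def N_def)
  qed
  have apinj: "inj_on (\<lambda>j. ap p j mod int n) {1..int n}" if p: "p \<in> perms" for p
  proof (rule inj_onI)
    fix j k assume jk: "j \<in> {1..int n}" "k \<in> {1..int n}" "ap p j mod int n = ap p k mod int n"
    then have "ap p j = ap p k" using aprange[OF p, of j] aprange[OF p, of k] N_def by simp
    then have "(0 # p) ! nat (j - 1) = (0 # p) ! nat (k - 1)" by (simp add: ap_def)
    moreover have "nat (j - 1) < length (0 # p)" "nat (k - 1) < length (0 # p)" using jk dp[OF p] by auto
    ultimately have "nat (j - 1) = nat (k - 1)" using nth_eq_iff_index_eq[OF dp(1)[OF p]] by blast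
    then show "j = k" using jk eq_nat_nat_iff[of "j-1" "k-1"] by auto
  qed
  have psi: "Cg p (\<psi> p)" if p: "p \<in> perms" for p
  proof -
    have "\<exists>b. Cg p b" using construct[OF n apinj[OF p]] unfolding Cg_def by blast
    then show ?thesis unfolding \<psi>_def by (rule someI_ex)
  qed
  have inj: "inj_on \<psi> perms"
  proof (rule inj_onI)
    fix p q assume p: "p \<in> perms" and q: "q \<in> perms" and e: "\<psi> p = \<psi> q"
    have cp: "\<forall>i. 1 \<le> i \<and> i < N \<longrightarrow> (ap p (i+1) - ap p i) mod N = (\<psi> p (i+1) - \<psi> p i) mod N"
      using psi[OF p] N_def by (simp add: Cg_def)
    have cq: "\<forall>i. 1 \<le> i \<and> i < N \<longrightarrow> (\<psi> p (i+1) - \<psi> p i) mod N = (ap q (i+1) - ap q i) mod N"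
      using psi[OF q] e N_def by (simp add: Cg_def)
    have "ap p k = ap q k" if k: "k \<in> {1..N}" for k
    proof -
      have "(ap p k - ap p 1) mod N = (ap q k - ap q 1) mod N"
        using diffcong[OF cp k] diffcong[OF cq k] by simp
      then have "ap p k mod N = ap q k mod N" by (simp add: ap_def)
      then show ?thesis using aprange[OF p k] aprange[OF q k] by simp
    qed
    then have apq: "\<And>k. k \<in> {1..N} \<Longrightarrow> ap p k = ap q k" by blast
    have "(0 # p) ! m = (0 # q) ! m" if "m < n" for m
    proof -
      have "int m + 1 \<in> {1..N}" using that N_def by simp
      then have "ap p (int m + 1) = ap q (int m + 1)" by (rule apq)
      then show ?thesis by (simp add: ap_def)
    qed
    then have "0 # p = 0 # q" using dp[OF p] dp[OF q] by (intro nth_equalityI) auto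
    then show "p = q" by simp
  qed
  have "\<psi> ` perms \<subseteq> BIAS n" using psi by (auto simp: Cg_def)
  then have "card perms \<le> card (BIAS n)" using card_inj_on_le[OF inj _ fin] by simp
  moreover have "card perms = fact (n - 1)" unfolding perms_def by simp
  ultimately show ?thesis by simp
qed



lemma cone_code:
  assumes "v \<in> cone n b" "b \<in> BIAS n" "n \<ge> 2"
  shows "gapvec n b = map (\<lambda>k. v ! k mod (k + 1)) [0..<n-1]"
proof -
  obtain t where t: "length t = n - 1" "v = map (\<lambda>i. i * t ! (i - 1) + gapvec n b ! (i - 1)) [1..<n]"
    using assms(1) unfolding cone_def by blast
  show ?thesis
  proof (rule nth_equalityI)
    show "length (gapvec n b) = length (map (\<lambda>k. v ! k mod (k + 1)) [0..<n-1])" by (simp add: gapvec_len)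
  next
    fix k assume "k < length (gapvec n b)"
    then have k: "k < n - 1" by (simp add: gapvec_len)
    have vk: "v ! k = (k+1) * t ! k + gapvec n b ! k" using t(2) k by simp
    have lt: "gapvec n b ! k < k + 1" proof -
      have "k + 1 < n" using k by simp
      then have "gapvec n b ! (k + 1 - 1) \<le> k + 1 - 1" using bias_gap_bound[OF assms(2,3), of "k+1"] by simp
      then show ?thesis by simp
    qed
    have "v ! k mod (k+1) = gapvec n b ! k" using vk lt by (metis add.commute mod_less mod_mult_self2)
    then show "gapvec n b ! k = map (\<lambda>k. v ! k mod (k + 1)) [0..<n-1] ! k" using k by simp
  qed
qed

theorem mainTheorem4:
  fixes n :: nat
  assumes "n \<ge> 2"
  shows "(\<forall>b \<in> BIAS n. cone n b \<subseteq> {v. length v = n - 1})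
       \<and> (\<forall>v. length v = n - 1 \<longrightarrow> (\<exists>!b. b \<in> BIAS n \<and> v \<in> cone n b))
       \<and> (\<forall>w \<in> Scirc n. gapvec n w \<in> cone n (bias n w))"
proof (intro conjI)
  show "\<forall>b \<in> BIAS n. cone n b \<subseteq> {v. length v = n - 1}" by (auto simp: cone_def)
  show "\<forall>w \<in> Scirc n. gapvec n w \<in> cone n (bias n w)" using part3[OF assms] by blast
  have injG: "inj_on (gapvec n) (BIAS n)" using bias_inj assms by (auto intro: inj_onI)
  have Gsub: "gapvec n ` BIAS n \<subseteq> codes (n - 1)" using gap_codes assms by auto
  have fc: "finite (codes (n-1))" "card (codes (n-1)) = fact (n-1)" using codes_card by auto
  have finB: "finite (BIAS n)" using finite_imageD[OF finite_subset[OF Gsub fc(1)] injG] .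
  have "card (gapvec n ` BIAS n) = card (BIAS n)" using card_image[OF injG] .
  also have "\<dots> \<ge> fact (n-1)" using bias_card_lower[OF assms finB] .
  finally have "card (gapvec n ` BIAS n) = card (codes (n-1))"
    using card_mono[OF fc(1) Gsub] fc(2) by simp
  then have surjG: "gapvec n ` BIAS n = codes (n - 1)" using card_subset_eq[OF fc(1) Gsub] by simp
  show "\<forall>v. length v = n - 1 \<longrightarrow> (\<exists>!b. b \<in> BIAS n \<and> v \<in> cone n b)"
  proof (intro allI impI)
    fix v :: "nat list" assume lv: "length v = n - 1"
    define c where "c = map (\<lambda>k. v ! k mod (k + 1)) [0..<n-1]"
    have "c \<in> codes (n - 1)" unfolding c_def codes_def
      by (auto simp: less_Suc_eq_le[symmetric])
    then obtain b where b: "b \<in> BIAS n" "gapvec n b = c" using surjG by (metis imageE)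
    have vin: "v \<in> cone n b"
    proof -
      define t where "t = map (\<lambda>k. v ! k div (k + 1)) [0..<n-1]"
      have "v = map (\<lambda>i. i * t ! (i - 1) + gapvec n b ! (i - 1)) [1..<n]"
      proof (rule nth_equalityI)
        show "length v = length (map (\<lambda>i. i * t ! (i - 1) + gapvec n b ! (i - 1)) [1..<n])" using lv by simp
      next
        fix k assume "k < length v"
        then have k: "k < n - 1" using lv by simp
        have "map (\<lambda>i. i * t ! (i - 1) + gapvec n b ! (i - 1)) [1..<n] ! k
            = (k+1) * (v ! k div (k+1)) + v ! k mod (k+1)"
          using k b(2) by (simp add: t_def c_def)
        also have "\<dots> = v ! k" by (metis mult.commute div_mult_mod_eq)
        finally show "v ! k = map (\<lambda>i. i * t ! (i - 1) + gapvec n b ! (i - 1)) [1..<n] ! k" by simp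
      qed
      moreover have "length t = n - 1" by (simp add: t_def)
      ultimately show ?thesis unfolding cone_def by blast
    qed
    show "\<exists>!b. b \<in> BIAS n \<and> v \<in> cone n b"
    proof (rule ex1I[of _ b])
      show "b \<in> BIAS n \<and> v \<in> cone n b" using b vin by simp
    next
      fix b' assume b': "b' \<in> BIAS n \<and> v \<in> cone n b'"
      then have "gapvec n b' = c" using cone_code assms c_def by blast
      then show "b' = b" using bias_inj[of b' n b] b b' assms by simp
    qed
  qed
qed


end
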